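(* For every integer $i\ge0$ and generic $q,a,b,\kappa\in\mathbb C$, $$\sum_{j=0}^{i}\varphi_{q,a,b,\kappa}(j\mid i)=1.$$
   Context: $(a;q)_k=\prod_{m=0}^{k-1}(1-q^ma)$ for $k\ge0$. For $q,a,b,\kappa\in\mathbb C$ and integers $i,j\ge0$, $$\varphi_{q,a,b,\kappa}(j\mid i)=a^j\frac{\mathbf 1_{j\le i}(q;q)_i}{(q;q)_j(q;q)_{i-j}}\frac{(b/a;q)_j(a;q)_{i-j}}{(b;q)_i}\frac{(q^ib\kappa;q)_{i-j}(q^{i-j+1}\kappa;q)_j}{(q^{i-j}a\kappa;q)_{i-j}(q^{2i-2j+1}a\kappa;q)_j}.$$ *)

theory Defs
  imports Complex_Main
begin

definition qpoch :: "complex \<Rightarrow> complex \<Rightarrow> nat \<Rightarrow> complex" where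
  "qpoch a q k = (\<Prod>m<k. 1 - q ^ m * a)"

definition phi :: "complex \<Rightarrow> complex \<Rightarrow> complex \<Rightarrow> complex \<Rightarrow> nat \<Rightarrow> nat \<Rightarrow> complex" where
  "phi q a b \<kappa> j i =
     (if j \<le> i then
        a ^ j * (qpoch q q i / (qpoch q q j * qpoch q q (i - j)))
          * (qpoch (b / a) q j * qpoch a q (i - j) / qpoch b q i)
          * (qpoch (q ^ i * b * \<kappa>) q (i - j) * qpoch (q ^ (i - j + 1) * \<kappa>) q j
             / (qpoch (q ^ (i - j) * a * \<kappa>) q (i - j) * qpoch (q ^ (2 * i - 2 * j + 1) * a * \<kappa>) q j))
      else 0)"

text \<open>Genericity: every denominator occurring in phi(j|i), j = 0..i, is nonzero
  (including a \<noteq> 0, needed for b/a).\<close>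
definition generic_params :: "complex \<Rightarrow> complex \<Rightarrow> complex \<Rightarrow> complex \<Rightarrow> nat \<Rightarrow> bool" where
  "generic_params q a b \<kappa> i \<longleftrightarrow>
     a \<noteq> 0 \<and> qpoch b q i \<noteq> 0 \<and>
     (\<forall>j\<le>i. qpoch q q j \<noteq> 0 \<and> qpoch q q (i - j) \<noteq> 0 \<and>
             qpoch (q ^ (i - j) * a * \<kappa>) q (i - j) \<noteq> 0 \<and>
             qpoch (q ^ (2 * i - 2 * j + 1) * a * \<kappa>) q j \<noteq> 0)"

end

theory Submission
  imports Defs
begin


lemma qpoch_0[simp]: "qpoch x q 0 = 1" by (simp add: qpoch_def)
lemma qpoch_Suc: "qpoch x q (Suc k) = qpoch x q k * (1 - q^k*x)"
  by (simp add: qpoch_def)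
lemma qpoch_Suc_left: "qpoch x q (Suc k) = (1 - x) * qpoch (q*x) q k"
  unfolding qpoch_def by (subst prod.lessThan_Suc_shift) (simp add: mult_ac)
lemma qpoch_add: "qpoch x q (m + k) = qpoch x q m * qpoch (q^m*x) q k"
  by (induction k) (simp_all add: qpoch_Suc power_add mult_ac)
lemma qpoch_nz: "(\<And>m. m < k \<Longrightarrow> 1 - q^m*x \<noteq> 0) \<Longrightarrow> qpoch x q k \<noteq> 0"
  unfolding qpoch_def by (simp add: prod_zero_iff)
lemma qpoch_nzD: "qpoch x q k \<noteq> 0 \<Longrightarrow> m < k \<Longrightarrow> 1 - q^m*x \<noteq> 0"
  unfolding qpoch_def by (auto simp add: prod_zero_iff)

lemma polyB:
  fixes q u v a b K :: complex
  shows "(1-q*u*v)*(1-u*a)*(1-u^2*v*b*K)*(1-q*u^2*v*b*K)*(1-q*u*v*K)*(1-u*a*K)*(1-q^2*u^2*a*K)*a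
     - (1-u*v*b*K)*(1-q*u*K)*(1-q*u^2*v*a*K)*(1-q*u)*(1-u*v*b)*(1-u^2*a*K)*(1-q^2*u^2*v*a*K)*a
   = (1-v)*(1-u*a)*(1-u^2*v*b*K)*(1-u*a*K)*a*(q*u*((1-(q*u*v-1)*K-u*v*b*K)+(1+a)*K*q*u*(q*u^2*v^2*b*K-1)+a*K^2*q^2*u^3*v*(q-(q*u*v-1)*b-q*u*v*b*K)))
     - (a - v*b)*(1-q*u*K)*(1-q*u)*(1-q^2*u^2*v*a*K)*(a*u*((1-(q*u*v-1)*K-u*v*b*K)+(1+a)*K*u*(q*u^2*v^2*b*K-1)+a*K^2*u^3*v*(q-(q*u*v-1)*b-q*u*v*b*K)))"
  by algebra



definition Nt :: "complex \<Rightarrow> complex \<Rightarrow> complex \<Rightarrow> complex \<Rightarrow> nat \<Rightarrow> nat \<Rightarrow> complex" where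
  "Nt q a b \<kappa> n k = a*q^(k+1)*((1-(q^(n+1)-1)*\<kappa> - q^n*b*\<kappa>) + (1+a)*\<kappa>*q^(k+1)*(q^(2*n+1)*b*\<kappa>-1)
      + a*\<kappa>^2*q^(2*k+n+2)*(q-(q^(n+1)-1)*b - q^(n+1)*b*\<kappa>))"

definition Gc :: "complex \<Rightarrow> complex \<Rightarrow> complex \<Rightarrow> complex \<Rightarrow> nat \<Rightarrow> nat \<Rightarrow> complex" where
  "Gc q a b \<kappa> n j = a^(j-1) * (qpoch q q n / (qpoch q q (j-1) * qpoch q q (n-j+1)))
     * (qpoch (b/a) q j * qpoch a q (n-j+1) / qpoch b q (n+1))
     * (qpoch (q^(n+1)*b*\<kappa>) q (n-j) * qpoch (q^(n-j+2)*\<kappa>) q (j-1) / qpoch (q^(n-j+1)*a*\<kappa>) q (n+2))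
     * Nt q a b \<kappa> n (n-j)"

definition cnd :: "complex \<Rightarrow> complex \<Rightarrow> complex \<Rightarrow> complex \<Rightarrow> nat \<Rightarrow> bool" where
  "cnd q a b \<kappa> n \<longleftrightarrow> a \<noteq> 0 \<and> (\<forall>m<n. 1 - q^m*b \<noteq> 0) \<and> (\<forall>m. 1 \<le> m \<and> m \<le> n \<longrightarrow> 1 - q^m \<noteq> 0)
      \<and> (\<forall>m. 1 \<le> m \<and> m < 2*n \<longrightarrow> 1 - q^m*a*\<kappa> \<noteq> 0)"

lemma cnd_q: "cnd q a b \<kappa> n \<Longrightarrow> 1 \<le> m \<Longrightarrow> m \<le> n \<Longrightarrow> 1 - q^m \<noteq> 0"
  by (simp add: cnd_def)
lemma cnd_b: "cnd q a b \<kappa> n \<Longrightarrow> m < n \<Longrightarrow> 1 - q^m*b \<noteq> 0"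
  by (simp add: cnd_def)
lemma cnd_ak: "cnd q a b \<kappa> n \<Longrightarrow> 1 \<le> m \<Longrightarrow> m < 2*n \<Longrightarrow> 1 - q^m*a*\<kappa> \<noteq> 0"
  by (simp add: cnd_def)
lemma cnd_a: "cnd q a b \<kappa> n \<Longrightarrow> a \<noteq> 0"
  by (simp add: cnd_def)

lemma cnd_qq: "cnd q a b \<kappa> n \<Longrightarrow> t \<le> n \<Longrightarrow> qpoch q q t \<noteq> 0"
  apply (rule qpoch_nz)
  subgoal for m using cnd_q[of q a b \<kappa> n "Suc m"] by (auto simp: mult.commute)
  done
lemma cnd_qb: "cnd q a b \<kappa> n \<Longrightarrow> t \<le> n \<Longrightarrow> qpoch b q t \<noteq> 0"
  apply (rule qpoch_nz)
  using cnd_b[of q a b \<kappa> n] by auto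
lemma cnd_qak: "cnd q a b \<kappa> n \<Longrightarrow> 1 \<le> s \<Longrightarrow> s + t \<le> 2*n \<Longrightarrow> qpoch (q^s*a*\<kappa>) q t \<noteq> 0"
  apply (rule qpoch_nz)
  subgoal for m
    using cnd_ak[of q a b \<kappa> n "m+s"] by (simp add: power_add mult_ac)
  done



lemma qpoch_4: "qpoch y q (Suc (Suc (Suc (Suc m)))) = (1-y)*((1-q*y)*((1-q*(q*y))*(qpoch (q*(q*(q*y))) q m * (1 - q^m*(q*(q*(q*y)))))))"
proof -
  have 1: "qpoch y q (Suc (Suc (Suc (Suc m)))) = (1-y)*qpoch (q*y) q (Suc(Suc(Suc m)))" by (rule qpoch_Suc_left)
  have 2: "qpoch (q*y) q (Suc(Suc(Suc m))) = (1-q*y)*qpoch (q*(q*y)) q (Suc(Suc m))" by (rule qpoch_Suc_left)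
  have 3: "qpoch (q*(q*y)) q (Suc(Suc m)) = (1-q*(q*y))*qpoch (q*(q*(q*y))) q (Suc m)" by (rule qpoch_Suc_left)
  have 4: "qpoch (q*(q*(q*y))) q (Suc m) = qpoch (q*(q*(q*y))) q m * (1 - q^m*(q*(q*(q*y))))" by (rule qpoch_Suc)
  show ?thesis by (simp only: 1 2 3 4)
qed

lemma pw: "(q::complex)^4 = q*q*q*q" "q^5 = q*q*q*q*q" "q^6 = q*q*q*q*q*q"
  by (simp_all add: eval_nat_numeral)

lemma caseB:
  fixes q a b \<kappa> :: complex
  assumes c: "cnd q a b \<kappa> (Suc n)" and hj: "j = Suc j'" and hk: "k = Suc k'" and hn: "n = j + k"
  shows "phi q a b \<kappa> j (Suc n) - phi q a b \<kappa> j n = Gc q a b \<kappa> n j - Gc q a b \<kappa> n (Suc j)"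
proof -
  define u where "u = q^k"
  define v where "v = q^j"
  have qn: "q^n = u*v" by (simp add: u_def v_def hn power_add)
  have e_qqj: "qpoch q q j = qpoch q q j' * (1 - v)"
    by (simp add: hj v_def qpoch_Suc mult.commute)
  have e_nbk: "qpoch (q^n*b*\<kappa>) q k = (1 - u*v*b*\<kappa>) * qpoch (q^(n+1)*b*\<kappa>) q k'"
    by (simp add: hk qpoch_Suc_left qn mult_ac)
  have e_k1: "qpoch (q^(k+1)*\<kappa>) q j = (1 - q*u*\<kappa>) * qpoch (q^(k+2)*\<kappa>) q j'"
    by (simp add: hj qpoch_Suc_left u_def mult_ac)
  have e_kak: "qpoch (q^k*a*\<kappa>) q k = (1 - u*a*\<kappa>) * qpoch (q^(k+1)*a*\<kappa>) q k'"
    by (simp add: hk qpoch_Suc_left u_def mult_ac)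
  have nz_nk1: "1 - q*u^2*v*a*\<kappa> \<noteq> 0"
    using cnd_ak[OF c, of "n+k+1"] by (simp add: hn power_add u_def v_def power2_eq_square mult_ac)
  have e_2k1': "qpoch (q^(2*k+1)*a*\<kappa>) q j * (1 - q*u^2*v*a*\<kappa>) = (1 - q*u^2*a*\<kappa>)*(1 - q^2*u^2*a*\<kappa>)*qpoch (q^(2*k+3)*a*\<kappa>) q j'"
  proof -
    have "qpoch (q^(2*k+1)*a*\<kappa>) q j * (1 - q*u^2*v*a*\<kappa>) = qpoch (q^(2*k+1)*a*\<kappa>) q (Suc j)"
      by (simp add: qpoch_Suc u_def v_def power_add power_mult power2_eq_square power3_eq_cube pw mult_ac)
    also have "\<dots> = (1 - q*u^2*a*\<kappa>)*(1 - q^2*u^2*a*\<kappa>)*qpoch (q^(2*k+3)*a*\<kappa>) q j'"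
      by (simp add: hj qpoch_Suc_left u_def power_add power_mult power2_eq_square power3_eq_cube pw mult_ac)
    finally show ?thesis .
  qed
  have e_2k1: "qpoch (q^(2*k+1)*a*\<kappa>) q j = (1 - q*u^2*a*\<kappa>)*(1 - q^2*u^2*a*\<kappa>)*qpoch (q^(2*k+3)*a*\<kappa>) q j' / (1 - q*u^2*v*a*\<kappa>)"
    using e_2k1' nz_nk1 by (simp add: field_simps)

  have f1: "qpoch q q (Suc n) = qpoch q q n * (1 - q*u*v)"
    by (simp add: qpoch_Suc qn mult_ac)
  have f2: "qpoch q q (Suc k) = qpoch q q k * (1 - q*u)"
    by (simp add: qpoch_Suc u_def mult_ac)
  have f3: "qpoch a q (Suc k) = qpoch a q k * (1 - u*a)"
    by (simp add: qpoch_Suc u_def mult_ac)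
  have f4: "qpoch b q (Suc n) = qpoch b q n * (1 - u*v*b)"
    by (simp add: qpoch_Suc qn mult_ac)
  have f5: "qpoch (q^(Suc n)*b*\<kappa>) q (Suc k) = qpoch (q^(n+1)*b*\<kappa>) q k' * (1 - u^2*v*b*\<kappa>) * (1 - q*u^2*v*b*\<kappa>)"
    by (simp add: hk qpoch_Suc u_def v_def hn power_add power_mult power2_eq_square power3_eq_cube pw mult_ac)
  have f6: "qpoch (q^(k+2)*\<kappa>) q j = qpoch (q^(k+2)*\<kappa>) q j' * (1 - q*u*v*\<kappa>)"
    by (simp add: hj qpoch_Suc u_def v_def power_add power_mult power2_eq_square power3_eq_cube pw mult_ac)
  have f7: "qpoch (q^(Suc k)*a*\<kappa>) q (Suc k) = qpoch (q^(k+1)*a*\<kappa>) q k' * (1 - u^2*a*\<kappa>) * (1 - q*u^2*a*\<kappa>)"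
    by (simp add: hk qpoch_Suc u_def power_add power_mult power2_eq_square power3_eq_cube pw mult_ac)
  have f8: "qpoch (q^(2*k+3)*a*\<kappa>) q j = qpoch (q^(2*k+3)*a*\<kappa>) q j' * (1 - q^2*u^2*v*a*\<kappa>)"
    by (simp add: hj qpoch_Suc u_def v_def hn power_add power_mult power2_eq_square power3_eq_cube pw mult_ac)
  have g1: "qpoch q q (k+1) = qpoch q q k * (1 - q*u)"
    by (simp add: qpoch_Suc u_def mult_ac)
  have g2: "qpoch a q (k+1) = qpoch a q k * (1 - u*a)"
    by (simp add: qpoch_Suc u_def mult_ac)
  have g3: "qpoch b q (n+1) = qpoch b q n * (1 - u*v*b)"
    by (simp add: qpoch_Suc qn mult_ac)
  have g4: "qpoch (q^(n+1)*b*\<kappa>) q k = qpoch (q^(n+1)*b*\<kappa>) q k' * (1 - u^2*v*b*\<kappa>)"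
    by (simp add: hk qpoch_Suc u_def v_def hn power_add power_mult power2_eq_square power3_eq_cube pw mult_ac)
  have g5: "qpoch (q^(k+1)*a*\<kappa>) q (n+2) = qpoch (q^(k+1)*a*\<kappa>) q k' * (1-u^2*a*\<kappa>)*(1-q*u^2*a*\<kappa>)*(1-q^2*u^2*a*\<kappa>)*qpoch (q^(2*k+3)*a*\<kappa>) q j' * (1-q^2*u^2*v*a*\<kappa>)"
  proof -
    have "n + 2 = k' + Suc (Suc (Suc (Suc j')))" by (simp add: hn hj hk)
    then have "qpoch (q^(k+1)*a*\<kappa>) q (n+2) = qpoch (q^(k+1)*a*\<kappa>) q k' * qpoch (q^k'*(q^(k+1)*a*\<kappa>)) q (Suc (Suc (Suc (Suc j'))))"
      by (simp only: qpoch_add)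
    also have "\<dots> = qpoch (q^(k+1)*a*\<kappa>) q k' * ((1-u^2*a*\<kappa>)*((1-q*u^2*a*\<kappa>)*((1-q^2*u^2*a*\<kappa>)*(qpoch (q^(2*k+3)*a*\<kappa>) q j' * (1-q^2*u^2*v*a*\<kappa>)))))"
      by (simp only: qpoch_4) (simp add: hk hn hj u_def v_def power_add power_mult power2_eq_square power3_eq_cube pw mult_ac)
    finally show ?thesis by (simp add: mult_ac)
  qed
  have g6: "Nt q a b \<kappa> n k = a*(q*u*((1-(q*u*v-1)*\<kappa>-u*v*b*\<kappa>)+(1+a)*\<kappa>*q*u*(q*u^2*v^2*b*\<kappa>-1)+a*\<kappa>^2*q^2*u^3*v*(q-(q*u*v-1)*b-q*u*v*b*\<kappa>)))"
    by (simp add: Nt_def u_def v_def hn power_add power_mult power2_eq_square power3_eq_cube pw mult_ac algebra_simps)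
  have h1: "qpoch (b/a) q (Suc j) = qpoch (b/a) q j * (a - v*b) / a"
    using cnd_a[OF c] by (simp add: qpoch_Suc v_def field_simps)
  have h3: "qpoch (q^k*a*\<kappa>) q (n+2) = (1-u*a*\<kappa>) * qpoch (q^(k+1)*a*\<kappa>) q k' * (1-u^2*a*\<kappa>)*(1-q*u^2*a*\<kappa>)*(1-q^2*u^2*a*\<kappa>)*qpoch (q^(2*k+3)*a*\<kappa>) q j'"
  proof -
    have "n + 2 = Suc (k' + Suc (Suc (Suc j')))" by (simp add: hn hj hk)
    then have "qpoch (q^k*a*\<kappa>) q (n+2) = (1 - q^k*a*\<kappa>) * (qpoch (q*(q^k*a*\<kappa>)) q k' * qpoch (q^k'*(q*(q^k*a*\<kappa>))) q (Suc (Suc (Suc j'))))"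
      by (simp only: qpoch_add qpoch_Suc_left)
    also have "\<dots> = (1 - u*a*\<kappa>) * (qpoch (q^(k+1)*a*\<kappa>) q k' * ((1-u^2*a*\<kappa>)*((1-q*u^2*a*\<kappa>)*((1-q^2*u^2*a*\<kappa>)*qpoch (q^(2*k+3)*a*\<kappa>) q j'))))"
      by (simp only: qpoch_Suc_left) (simp add: hk hn hj u_def v_def power_add power_mult power2_eq_square power3_eq_cube pw mult_ac)
    finally show ?thesis by (simp add: mult_ac)
  qed
  have h4: "Nt q a b \<kappa> n k' = a*(u*((1-(q*u*v-1)*\<kappa>-u*v*b*\<kappa>)+(1+a)*\<kappa>*u*(q*u^2*v^2*b*\<kappa>-1)+a*\<kappa>^2*u^3*v*(q-(q*u*v-1)*b-q*u*v*b*\<kappa>)))"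
    by (simp add: Nt_def u_def v_def hn hk power_add power_mult power2_eq_square power3_eq_cube pw mult_ac algebra_simps)

  have nq: "\<And>m. 1 \<le> m \<Longrightarrow> m \<le> Suc n \<Longrightarrow> 1 - q^m \<noteq> 0" using cnd_q[OF c] by blast
  have nak: "\<And>m. 1 \<le> m \<Longrightarrow> m \<le> 2*n+1 \<Longrightarrow> 1 - q^m*a*\<kappa> \<noteq> 0" using cnd_ak[OF c] by simp
  have na: "a \<noteq> 0" using cnd_a[OF c] .
  have n1: "qpoch q q n \<noteq> 0" "qpoch q q j' \<noteq> 0" "qpoch q q k \<noteq> 0" "qpoch b q n \<noteq> 0"
    using cnd_qq[OF c, of n] cnd_qq[OF c, of j'] cnd_qq[OF c, of k] cnd_qb[OF c, of n] by (auto simp: hn hj)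
  have n2: "qpoch (q^(k+1)*a*\<kappa>) q k' \<noteq> 0" "qpoch (q^(2*k+3)*a*\<kappa>) q j' \<noteq> 0"
    using cnd_qak[OF c, of "k+1" k'] cnd_qak[OF c, of "2*k+3" j'] by (auto simp: hn hj hk)
  have n3: "1 - v \<noteq> 0" using nq[of j] by (simp add: v_def hn hj)
  have n4: "1 - q*u \<noteq> 0" using nq[of "k+1"] by (simp add: u_def hn hk mult.commute)
  have n5: "1 - u*v*b \<noteq> 0" using cnd_b[OF c, of n] by (simp add: qn)
  have n6: "1 - u*a*\<kappa> \<noteq> 0" using nak[of k] by (simp add: u_def hn hk)
  have n7: "1 - u^2*a*\<kappa> \<noteq> 0" using nak[of "2*k"] by (simp add: u_def hn hk power_add power_mult power2_eq_square power3_eq_cube pw mult_ac)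
  have n8: "1 - q*u^2*a*\<kappa> \<noteq> 0" using nak[of "2*k+1"] by (simp add: u_def hn hk power_add power_mult power2_eq_square power3_eq_cube pw mult_ac)
  have n9: "1 - q^2*u^2*a*\<kappa> \<noteq> 0" using nak[of "2*k+2"] by (simp add: u_def hn hk hj power_add power_mult power2_eq_square power3_eq_cube pw mult_ac)
  have n10: "1 - q^2*u^2*v*a*\<kappa> \<noteq> 0" using nak[of "n+k+2"] by (simp add: u_def v_def hn hk hj power_add power_mult power2_eq_square power3_eq_cube pw mult_ac)
  define F_v where "F_v = 1 - v"
  define F_qu where "F_qu = 1 - q*u"
  define F_uvb where "F_uvb = 1 - u*v*b"
  define F_uak where "F_uak = 1 - u*a*\<kappa>"
  define F_u2ak where "F_u2ak = 1 - u^2*a*\<kappa>"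
  define F_qu2ak where "F_qu2ak = 1 - q*u^2*a*\<kappa>"
  define F_q2u2ak where "F_q2u2ak = 1 - q^2*u^2*a*\<kappa>"
  define F_q2u2vak where "F_q2u2vak = 1 - q^2*u^2*v*a*\<kappa>"
  define F_qu2vak where "F_qu2vak = 1 - q*u^2*v*a*\<kappa>"
  define F_uvbk where "F_uvbk = 1 - u*v*b*\<kappa>"
  define F_quk where "F_quk = 1 - q*u*\<kappa>"
  define F_quv where "F_quv = 1 - q*u*v"
  define F_ua where "F_ua = 1 - u*a"
  define F_u2vbk where "F_u2vbk = 1 - u^2*v*b*\<kappa>"
  define F_qu2vbk where "F_qu2vbk = 1 - q*u^2*v*b*\<kappa>"
  define F_quvk where "F_quvk = 1 - q*u*v*\<kappa>"
  define F_avb where "F_avb = a - v*b"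
  define N1 where "N1 = (1-(q*u*v-1)*\<kappa>-u*v*b*\<kappa>)+(1+a)*\<kappa>*q*u*(q*u^2*v^2*b*\<kappa>-1)+a*\<kappa>^2*q^2*u^3*v*(q-(q*u*v-1)*b-q*u*v*b*\<kappa>)"
  define N2 where "N2 = (1-(q*u*v-1)*\<kappa>-u*v*b*\<kappa>)+(1+a)*\<kappa>*u*(q*u^2*v^2*b*\<kappa>-1)+a*\<kappa>^2*u^3*v*(q-(q*u*v-1)*b-q*u*v*b*\<kappa>)"
  note E = e_qqj e_nbk e_k1 e_kak e_2k1 f1 f2 f3 f4 f5 f6 f7 f8 g1 g2 g3 g4 g5 g6 h1 h3 h4
  note E' = E[folded F_v_def F_qu_def F_uvb_def F_uak_def F_u2ak_def F_qu2ak_def F_q2u2ak_def F_q2u2vak_def F_qu2vak_def F_uvbk_def F_quk_def F_quv_def F_ua_def F_u2vbk_def F_qu2vbk_def F_quvk_def F_avb_def N1_def N2_def]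
  note NZ = n1 n2 na n3 n4 n5 n6 n7 n8 n9 n10 nz_nk1
  note NZ' = NZ[folded F_v_def F_qu_def F_uvb_def F_uak_def F_u2ak_def F_qu2ak_def F_q2u2ak_def F_q2u2vak_def F_qu2vak_def F_uvbk_def F_quk_def F_quv_def F_ua_def F_u2vbk_def F_qu2vbk_def F_quvk_def F_avb_def N1_def N2_def]
  define X where "X = a^j * (qpoch q q n / (qpoch q q j' * F_v * qpoch q q k)) * (qpoch (b/a) q j * qpoch a q k / qpoch b q n) * (qpoch (q^(n+1)*b*\<kappa>) q k' * qpoch (q^(k+2)*\<kappa>) q j' / (qpoch (q^(k+1)*a*\<kappa>) q k' * qpoch (q^(2*k+3)*a*\<kappa>) q j'))"
  define D where "D = F_qu*F_uvb*F_uak*F_u2ak*F_qu2ak*F_q2u2ak*F_q2u2vak*a"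
  have T0: "phi q a b \<kappa> j n = X / D * (F_uvbk*F_quk*F_qu2vak*F_qu*F_uvb*F_u2ak*F_q2u2vak*a)"
  proof -
    have "phi q a b \<kappa> j n = a^j * (qpoch q q n / (qpoch q q j * qpoch q q k)) * (qpoch (b/a) q j * qpoch a q k / qpoch b q n) * (qpoch (q^n*b*\<kappa>) q k * qpoch (q^(k+1)*\<kappa>) q j / (qpoch (q^k*a*\<kappa>) q k * qpoch (q^(2*k+1)*a*\<kappa>) q j))"
      by (simp add: phi_def hn)
    also have "\<dots> = X / D * (F_uvbk*F_quk*F_qu2vak*F_qu*F_uvb*F_u2ak*F_q2u2vak*a)"
      unfolding X_def D_def
      by (simp only: E') (simp add: field_simps NZ')
    finally show ?thesis .
  qed
  have T1: "phi q a b \<kappa> j (Suc n) = X / D * (F_quv*F_ua*F_u2vbk*F_qu2vbk*F_quvk*F_uak*F_q2u2ak*a)"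
  proof -
    have "phi q a b \<kappa> j (Suc n) = a^j * (qpoch q q (Suc n) / (qpoch q q j * qpoch q q (Suc k))) * (qpoch (b/a) q j * qpoch a q (Suc k) / qpoch b q (Suc n)) * (qpoch (q^(Suc n)*b*\<kappa>) q (Suc k) * qpoch (q^(k+2)*\<kappa>) q j / (qpoch (q^(Suc k)*a*\<kappa>) q (Suc k) * qpoch (q^(2*k+3)*a*\<kappa>) q j))"
      by (simp add: phi_def hn power_add power3_eq_cube mult_ac)
    also have "\<dots> = X / D * (F_quv*F_ua*F_u2vbk*F_qu2vbk*F_quvk*F_uak*F_q2u2ak*a)"
      unfolding X_def D_def
      by (simp only: E') (simp add: field_simps NZ')
    finally show ?thesis .
  qed
  have TG: "Gc q a b \<kappa> n j = X / D * (F_v*F_ua*F_u2vbk*F_uak*a*(q*u*N1))"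
  proof -
    have "Gc q a b \<kappa> n j = a^j' * (qpoch q q n / (qpoch q q j' * qpoch q q (k+1))) * (qpoch (b/a) q j * qpoch a q (k+1) / qpoch b q (n+1)) * (qpoch (q^(n+1)*b*\<kappa>) q k * qpoch (q^(k+2)*\<kappa>) q j' / qpoch (q^(k+1)*a*\<kappa>) q (n+2)) * Nt q a b \<kappa> n k"
      by (simp add: Gc_def hn hj)
    also have "\<dots> = X / D * (F_v*F_ua*F_u2vbk*F_uak*a*(q*u*N1))"
      unfolding X_def D_def
      by (simp only: E') (simp add: field_simps NZ' hj)
    finally show ?thesis .
  qed
  have TG1: "Gc q a b \<kappa> n (Suc j) = X / D * (F_avb*F_quk*F_qu*F_q2u2vak*(a*u*N2))"
  proof -
    have "Gc q a b \<kappa> n (Suc j) = a^j * (qpoch q q n / (qpoch q q j * qpoch q q k)) * (qpoch (b/a) q (Suc j) * qpoch a q k / qpoch b q (n+1)) * (qpoch (q^(n+1)*b*\<kappa>) q k' * qpoch (q^(k+1)*\<kappa>) q j / qpoch (q^k*a*\<kappa>) q (n+2)) * Nt q a b \<kappa> n k'"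
      by (simp add: Gc_def hn hk)
    also have "\<dots> = X / D * (F_avb*F_quk*F_qu*F_q2u2vak*(a*u*N2))"
      unfolding X_def D_def
      by (simp only: E') (simp add: field_simps NZ')
    finally show ?thesis .
  qed
  have P: "F_quv*F_ua*F_u2vbk*F_qu2vbk*F_quvk*F_uak*F_q2u2ak*a - F_uvbk*F_quk*F_qu2vak*F_qu*F_uvb*F_u2ak*F_q2u2vak*a = F_v*F_ua*F_u2vbk*F_uak*a*(q*u*N1) - F_avb*F_quk*F_qu*F_q2u2vak*(a*u*N2)"
    unfolding F_v_def F_qu_def F_uvb_def F_uak_def F_u2ak_def F_qu2ak_def F_q2u2ak_def F_q2u2vak_def F_qu2vak_def F_uvbk_def F_quk_def F_quv_def F_ua_def F_u2vbk_def F_qu2vbk_def F_quvk_def F_avb_def N1_def N2_def by (rule polyB)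
  show ?thesis
    by (simp only: T0 T1 TG TG1 right_diff_distrib[symmetric] P)
qed



lemma polyA: fixes q w a b \<kappa> :: complex shows "(1 - w*a)*(1 - w^2*b*\<kappa>)*(1 - q*w^2*b*\<kappa>)*(1 - w*a*\<kappa>) - (1 - w*b*\<kappa>)*(1 - w*b)*(1 - w^2*a*\<kappa>)*(1 - q*w^2*a*\<kappa>) = - ((a - b)*w*((1-(q*w-1)*\<kappa>-w*b*\<kappa>)+(1+a)*\<kappa>*w*(q*w^2*b*\<kappa>-1)+a*\<kappa>^2*w^3*(q-(q*w-1)*b-q*w*b*\<kappa>)))"
  by algebra
lemma polyC: fixes q v a b \<kappa> :: complex shows "(1 - q*v)*(1 - a)*(1 - q*v*b*\<kappa>)*(1 - q*v*\<kappa>)*(1 - q^2*a*\<kappa>) - (1 - q*\<kappa>)*(1 - q*v*a*\<kappa>)*(1 - q)*(1 - v*b)*(1 - q^2*v*a*\<kappa>) = (1 - v)*(1 - a)*(q*((1-(q*v-1)*\<kappa>-v*b*\<kappa>)+(1+a)*\<kappa>*q*(q*v^2*b*\<kappa>-1)+a*\<kappa>^2*q^2*v*(q-(q*v-1)*b-q*v*b*\<kappa>))) - (a - v*b)*(1 - q*\<kappa>)*(1 - q*v*\<kappa>)*(1 - q)*(1 - q^2*v*a*\<kappa>)"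
  by algebra

lemma caseA:
  fixes q a b \<kappa> :: complex
  assumes c: "cnd q a b \<kappa> (Suc n)" and hn: "n = Suc n'"
  shows "phi q a b \<kappa> 0 (Suc n) - phi q a b \<kappa> 0 n = Gc q a b \<kappa> n 0 * 0 - Gc q a b \<kappa> n 1"
proof -
  define w where "w = q^n"
  have a1: "qpoch (q^n*b*\<kappa>) q n = (1 - w*b*\<kappa>) * qpoch (q^(n+1)*b*\<kappa>) q n'"
    by (simp add: hn qpoch_Suc_left w_def mult_ac)
  have a2: "qpoch (q^n*a*\<kappa>) q n = (1 - w*a*\<kappa>) * qpoch (q^(n+1)*a*\<kappa>) q n'"
    by (simp add: hn qpoch_Suc_left w_def mult_ac)
  have a3: "qpoch a q (Suc n) = qpoch a q n * (1 - w*a)" by (simp add: qpoch_Suc w_def mult_ac)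
  have a4: "qpoch b q (Suc n) = qpoch b q n * (1 - w*b)" by (simp add: qpoch_Suc w_def mult_ac)
  have a4': "qpoch b q (n+1) = qpoch b q n * (1 - w*b)" by (simp add: qpoch_Suc w_def mult_ac)
  have a5: "qpoch (q^(Suc n)*b*\<kappa>) q (Suc n) = qpoch (q^(n+1)*b*\<kappa>) q n' * (1 - w^2*b*\<kappa>) * (1 - q*w^2*b*\<kappa>)"
    by (simp add: hn qpoch_Suc w_def power_add power_mult power2_eq_square power3_eq_cube pw mult_ac)
  have a6: "qpoch (q^(Suc n)*a*\<kappa>) q (Suc n) = qpoch (q^(n+1)*a*\<kappa>) q n' * (1 - w^2*a*\<kappa>) * (1 - q*w^2*a*\<kappa>)"
    by (simp add: hn qpoch_Suc w_def power_add power_mult power2_eq_square power3_eq_cube pw mult_ac)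
  have a7: "qpoch (b/a) q 1 = (a - b) / a" using cnd_a[OF c] by (simp add: qpoch_def field_simps)
  have a8: "qpoch (q^n*a*\<kappa>) q (n+2) = (1 - w*a*\<kappa>) * qpoch (q^(n+1)*a*\<kappa>) q n' * (1 - w^2*a*\<kappa>) * (1 - q*w^2*a*\<kappa>)"
  proof -
    have "qpoch (q^n*a*\<kappa>) q (n+2) = (1 - q^n*a*\<kappa>) * qpoch (q*(q^n*a*\<kappa>)) q (Suc (Suc n'))"
      by (simp add: hn qpoch_Suc_left)
    also have "\<dots> = (1 - w*a*\<kappa>) * (qpoch (q^(n+1)*a*\<kappa>) q n' * (1 - w^2*a*\<kappa>) * (1 - q*w^2*a*\<kappa>))"
      by (simp only: qpoch_Suc) (simp add: hn w_def power_add power_mult power2_eq_square power3_eq_cube pw mult_ac)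
    finally show ?thesis by (simp add: mult_ac)
  qed
  have a9: "Nt q a b \<kappa> n n' = a*(w*((1-(q*w-1)*\<kappa>-w*b*\<kappa>)+(1+a)*\<kappa>*w*(q*w^2*b*\<kappa>-1)+a*\<kappa>^2*w^3*(q-(q*w-1)*b-q*w*b*\<kappa>)))"
    by (simp add: Nt_def w_def hn power_add power_mult power2_eq_square power3_eq_cube pw mult_ac algebra_simps)
  have na: "a \<noteq> 0" using cnd_a[OF c] .
  have nak: "\<And>m. 1 \<le> m \<Longrightarrow> m \<le> 2*n+1 \<Longrightarrow> 1 - q^m*a*\<kappa> \<noteq> 0" using cnd_ak[OF c] by simp
  have n1: "qpoch q q n \<noteq> 0" "qpoch b q n \<noteq> 0" "qpoch q q (Suc n) \<noteq> 0"
    using cnd_qq[OF c, of n] cnd_qb[OF c, of n] cnd_qq[OF c, of "Suc n"] by auto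
  have n2: "qpoch (q^(n+1)*a*\<kappa>) q n' \<noteq> 0"
    using cnd_qak[OF c, of "n+1" n'] by (auto simp: hn)
  have n3: "1 - w*b \<noteq> 0" using cnd_b[OF c, of n] by (simp add: w_def)
  have n4: "1 - w*a*\<kappa> \<noteq> 0" using nak[of n] by (simp add: w_def hn)
  have n5: "1 - w^2*a*\<kappa> \<noteq> 0" using nak[of "2*n"] by (simp add: w_def hn power_add power_mult power2_eq_square power3_eq_cube pw mult_ac)
  have n6: "1 - q*w^2*a*\<kappa> \<noteq> 0" using nak[of "2*n+1"] by (simp add: w_def hn power_add power_mult power2_eq_square power3_eq_cube pw mult_ac)
  define F_wa where "F_wa = 1 - w*a"
  define F_w2bk where "F_w2bk = 1 - w^2*b*\<kappa>"
  define F_qw2bk where "F_qw2bk = 1 - q*w^2*b*\<kappa>"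
  define F_wak where "F_wak = 1 - w*a*\<kappa>"
  define F_wbk where "F_wbk = 1 - w*b*\<kappa>"
  define F_wb where "F_wb = 1 - w*b"
  define F_w2ak where "F_w2ak = 1 - w^2*a*\<kappa>"
  define F_qw2ak where "F_qw2ak = 1 - q*w^2*a*\<kappa>"
  define F_ab where "F_ab = a - b"
  define NA where "NA = (1-(q*w-1)*\<kappa>-w*b*\<kappa>)+(1+a)*\<kappa>*w*(q*w^2*b*\<kappa>-1)+a*\<kappa>^2*w^3*(q-(q*w-1)*b-q*w*b*\<kappa>)"
  note E = a1 a2 a3 a4 a4' a5 a6 a7 a8 a9
  note E' = E[folded F_wa_def F_w2bk_def F_qw2bk_def F_wak_def F_wbk_def F_wb_def F_w2ak_def F_qw2ak_def F_ab_def NA_def]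
  note NZ = n1 n2 na n3 n4 n5 n6
  note NZ' = NZ[folded F_wa_def F_w2bk_def F_qw2bk_def F_wak_def F_wbk_def F_wb_def F_w2ak_def F_qw2ak_def F_ab_def]
  define X where "X = qpoch a q n / qpoch b q n * (qpoch (q^(n+1)*b*\<kappa>) q n' / qpoch (q^(n+1)*a*\<kappa>) q n')"
  define D where "D = F_wb*F_wak*F_w2ak*F_qw2ak"
  have T0: "phi q a b \<kappa> 0 n = X / D * (F_wbk*F_wb*F_w2ak*F_qw2ak)"
  proof -
    have "phi q a b \<kappa> 0 n = qpoch q q n / qpoch q q n * (qpoch a q n / qpoch b q n) * (qpoch (q^n*b*\<kappa>) q n / qpoch (q^n*a*\<kappa>) q n)"
      by (simp add: phi_def)
    also have "\<dots> = X / D * (F_wbk*F_wb*F_w2ak*F_qw2ak)"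
      unfolding X_def D_def
      by (simp only: E') (simp add: field_simps NZ')
    finally show ?thesis .
  qed
  have T1: "phi q a b \<kappa> 0 (Suc n) = X / D * (F_wa*F_w2bk*F_qw2bk*F_wak)"
  proof -
    have "phi q a b \<kappa> 0 (Suc n) = qpoch q q (Suc n) / qpoch q q (Suc n) * (qpoch a q (Suc n) / qpoch b q (Suc n)) * (qpoch (q^(Suc n)*b*\<kappa>) q (Suc n) / qpoch (q^(Suc n)*a*\<kappa>) q (Suc n))"
      by (simp add: phi_def)
    also have "\<dots> = X / D * (F_wa*F_w2bk*F_qw2bk*F_wak)"
      unfolding X_def D_def
      by (simp only: E') (simp add: field_simps NZ')
    finally show ?thesis .
  qed
  have TG: "Gc q a b \<kappa> n 1 = X / D * (F_ab*w*NA)"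
  proof -
    have "Gc q a b \<kappa> n 1 = qpoch q q n / qpoch q q n * (qpoch (b/a) q 1 * qpoch a q n / qpoch b q (n+1)) * (qpoch (q^(n+1)*b*\<kappa>) q n' / qpoch (q^n*a*\<kappa>) q (n+2)) * Nt q a b \<kappa> n n'"
      by (simp add: Gc_def hn)
    also have "\<dots> = X / D * (F_ab*w*NA)"
      unfolding X_def D_def
      by (simp only: E') (simp add: field_simps NZ')
    finally show ?thesis .
  qed
  have P: "F_wa*F_w2bk*F_qw2bk*F_wak - F_wbk*F_wb*F_w2ak*F_qw2ak = - (F_ab*w*NA)"
    unfolding F_wa_def F_w2bk_def F_qw2bk_def F_wak_def F_wbk_def F_wb_def F_w2ak_def F_qw2ak_def F_ab_def NA_def by (rule polyA)
  show ?thesis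
    by (simp only: T0 T1 TG mult_zero_right diff_0 right_diff_distrib[symmetric] P mult_minus_right)
qed

lemma caseC:
  fixes q a b \<kappa> :: complex
  assumes c: "cnd q a b \<kappa> (Suc n)" and hn: "n = Suc n'"
  shows "phi q a b \<kappa> n (Suc n) - phi q a b \<kappa> n n = Gc q a b \<kappa> n n - phi q a b \<kappa> (Suc n) (Suc n)"
proof -
  define v where "v = q^n"
  have c1: "qpoch (q*\<kappa>) q n = (1 - q*\<kappa>) * qpoch (q^2*\<kappa>) q n'"
    by (simp add: hn qpoch_Suc_left power2_eq_square mult_ac)
  have nak: "\<And>m. 1 \<le> m \<Longrightarrow> m \<le> 2*n+1 \<Longrightarrow> 1 - q^m*a*\<kappa> \<noteq> 0" using cnd_ak[OF c] by simp
  have nz_qv: "1 - q*v*a*\<kappa> \<noteq> 0" using nak[of "n+1"] by (simp add: v_def mult_ac)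
  have c2': "qpoch (q*a*\<kappa>) q n * (1 - q*v*a*\<kappa>) = (1 - q*a*\<kappa>) * (1 - q^2*a*\<kappa>) * qpoch (q^3*a*\<kappa>) q n'"
  proof -
    have "qpoch (q*a*\<kappa>) q n * (1 - q*v*a*\<kappa>) = qpoch (q*a*\<kappa>) q (Suc n)"
      by (simp add: qpoch_Suc v_def mult_ac)
    also have "\<dots> = (1 - q*a*\<kappa>) * ((1 - q^2*a*\<kappa>) * qpoch (q^3*a*\<kappa>) q n')"
      by (simp only: hn qpoch_Suc_left) (simp add: power_add power_mult power2_eq_square power3_eq_cube pw mult_ac)
    finally show ?thesis by (simp add: mult_ac)
  qed
  have c2: "qpoch (q*a*\<kappa>) q n = (1 - q*a*\<kappa>) * (1 - q^2*a*\<kappa>) * qpoch (q^3*a*\<kappa>) q n' / (1 - q*v*a*\<kappa>)"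
    using c2' nz_qv by (simp add: field_simps)
  have c3: "qpoch q q (Suc n) = qpoch q q n * (1 - q*v)" by (simp add: qpoch_Suc v_def mult_ac)
  have c4: "qpoch q q 1 = 1 - q" by (simp add: qpoch_def)
  have c5: "qpoch a q 1 = 1 - a" by (simp add: qpoch_def)
  have c6: "qpoch b q (Suc n) = qpoch b q n * (1 - v*b)" by (simp add: qpoch_Suc v_def mult_ac)
  have c6': "qpoch b q (n+1) = qpoch b q n * (1 - v*b)" by (simp add: qpoch_Suc v_def mult_ac)
  have c7: "qpoch (q^(Suc n)*b*\<kappa>) q 1 = 1 - q*v*b*\<kappa>" by (simp add: qpoch_def v_def mult_ac)
  have c8: "qpoch (q^2*\<kappa>) q n = qpoch (q^2*\<kappa>) q n' * (1 - q*v*\<kappa>)"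
    by (simp add: hn qpoch_Suc v_def power_add power_mult power2_eq_square power3_eq_cube pw mult_ac)
  have c9: "qpoch (q*a*\<kappa>) q 1 = 1 - q*a*\<kappa>" by (simp add: qpoch_def)
  have c10: "qpoch (q^3*a*\<kappa>) q n = qpoch (q^3*a*\<kappa>) q n' * (1 - q^2*v*a*\<kappa>)"
    by (simp add: hn qpoch_Suc v_def power_add power_mult power2_eq_square power3_eq_cube pw mult_ac)
  have c11: "qpoch q q n = qpoch q q n' * (1 - v)" by (simp add: hn qpoch_Suc v_def mult_ac)
  have c12: "qpoch (q*a*\<kappa>) q (n+2) = (1 - q*a*\<kappa>) * (1 - q^2*a*\<kappa>) * qpoch (q^3*a*\<kappa>) q n' * (1 - q^2*v*a*\<kappa>)"
  proof -
    have 1: "qpoch (q*a*\<kappa>) q (n+2) = (1 - q*a*\<kappa>) * qpoch (q*(q*a*\<kappa>)) q (Suc (Suc n'))"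
      by (simp add: hn qpoch_Suc_left)
    have 2: "qpoch (q*(q*a*\<kappa>)) q (Suc (Suc n')) = (1 - q*(q*a*\<kappa>)) * qpoch (q*(q*(q*a*\<kappa>))) q (Suc n')"
      by (rule qpoch_Suc_left)
    have 3: "qpoch (q*(q*(q*a*\<kappa>))) q (Suc n') = qpoch (q*(q*(q*a*\<kappa>))) q n' * (1 - q^n'*(q*(q*(q*a*\<kappa>))))"
      by (rule qpoch_Suc)
    show ?thesis unfolding 1 2 3 by (simp add: hn v_def power_add power_mult power2_eq_square power3_eq_cube pw mult_ac)
  qed
  have c13: "Nt q a b \<kappa> n 0 = a*(q*((1-(q*v-1)*\<kappa>-v*b*\<kappa>)+(1+a)*\<kappa>*q*(q*v^2*b*\<kappa>-1)+a*\<kappa>^2*q^2*v*(q-(q*v-1)*b-q*v*b*\<kappa>)))"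
    by (simp add: Nt_def v_def power_add power_mult power2_eq_square power3_eq_cube pw mult_ac algebra_simps)
  have c14: "qpoch (b/a) q (Suc n) = qpoch (b/a) q n * (a - v*b) / a"
    using cnd_a[OF c] by (simp add: qpoch_Suc v_def field_simps)
  have c15: "qpoch (q*\<kappa>) q (Suc n) = (1 - q*\<kappa>) * qpoch (q^2*\<kappa>) q n' * (1 - q*v*\<kappa>)"
    by (simp only: qpoch_Suc c1) (simp add: v_def mult_ac)
  have c16: "qpoch (q*a*\<kappa>) q (Suc n) = (1 - q*a*\<kappa>) * (1 - q^2*a*\<kappa>) * qpoch (q^3*a*\<kappa>) q n'"
    using c2' by (simp add: qpoch_Suc v_def mult_ac)
  have na: "a \<noteq> 0" using cnd_a[OF c] .
  have n1: "qpoch q q n \<noteq> 0" "qpoch b q n \<noteq> 0" "qpoch q q (Suc n) \<noteq> 0" "qpoch q q n' \<noteq> 0"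
    using cnd_qq[OF c, of n] cnd_qb[OF c, of n] cnd_qq[OF c, of "Suc n"] cnd_qq[OF c, of n'] by (auto simp: hn)
  have n2: "qpoch (q^3*a*\<kappa>) q n' \<noteq> 0"
    using cnd_qak[OF c, of 3 n'] by (auto simp: hn)
  have n3: "1 - v*b \<noteq> 0" using cnd_b[OF c, of n] by (simp add: v_def)
  have n4: "1 - q \<noteq> 0" using cnd_q[OF c, of 1] by simp
  have n5: "1 - q*a*\<kappa> \<noteq> 0" using nak[of 1] by simp
  have n6: "1 - q^2*a*\<kappa> \<noteq> 0" using nak[of 2] by (simp add: hn)
  have n7: "1 - q^2*v*a*\<kappa> \<noteq> 0" using nak[of "n+2"] by (simp add: v_def hn power_add power_mult power2_eq_square power3_eq_cube pw mult_ac)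
  have n8: "1 - v \<noteq> 0" using cnd_q[OF c, of n] by (simp add: v_def hn)
  have n9: "1 - q*v \<noteq> 0" using cnd_q[OF c, of "Suc n"] by (simp add: v_def)
  define F_qk where "F_qk = 1 - q*\<kappa>"
  define F_qvak where "F_qvak = 1 - q*v*a*\<kappa>"
  define F_q where "F_q = 1 - q"
  define F_vb where "F_vb = 1 - v*b"
  define F_q2vak where "F_q2vak = 1 - q^2*v*a*\<kappa>"
  define F_qv where "F_qv = 1 - q*v"
  define F_a where "F_a = 1 - a"
  define F_qvbk where "F_qvbk = 1 - q*v*b*\<kappa>"
  define F_qvk where "F_qvk = 1 - q*v*\<kappa>"
  define F_q2ak where "F_q2ak = 1 - q^2*a*\<kappa>"
  define F_v where "F_v = 1 - v"
  define F_avb where "F_avb = a - v*b"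
  define F_qak where "F_qak = 1 - q*a*\<kappa>"
  define NC where "NC = (1-(q*v-1)*\<kappa>-v*b*\<kappa>)+(1+a)*\<kappa>*q*(q*v^2*b*\<kappa>-1)+a*\<kappa>^2*q^2*v*(q-(q*v-1)*b-q*v*b*\<kappa>)"
  note E = c1 c2 c3 c4 c5 c6 c6' c7 c8 c9 c10 c11 c12 c13 c14 c15 c16
  note E' = E[folded F_qk_def F_qvak_def F_q_def F_vb_def F_q2vak_def F_qv_def F_a_def F_qvbk_def F_qvk_def F_q2ak_def F_v_def F_avb_def F_qak_def NC_def]
  note NZ = n1 n2 na n3 n4 n5 n6 n7 n8 n9 nz_qv
  note NZ' = NZ[folded F_qk_def F_qvak_def F_q_def F_vb_def F_q2vak_def F_qv_def F_a_def F_qvbk_def F_qvk_def F_q2ak_def F_v_def F_avb_def F_qak_def]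
  define X where "X = a^n * (qpoch (b/a) q n / qpoch b q n) * (qpoch (q^2*\<kappa>) q n' / qpoch (q^3*a*\<kappa>) q n')"
  define D where "D = F_q*F_vb*F_qak*F_q2ak*F_q2vak"
  have T0: "phi q a b \<kappa> n n = X / D * (F_qk*F_qvak*F_q*F_vb*F_q2vak)"
  proof -
    have "phi q a b \<kappa> n n = a^n * (qpoch q q n / qpoch q q n) * (qpoch (b/a) q n / qpoch b q n) * (qpoch (q*\<kappa>) q n / qpoch (q*a*\<kappa>) q n)"
      by (simp add: phi_def)
    also have "\<dots> = X / D * (F_qk*F_qvak*F_q*F_vb*F_q2vak)"
      unfolding X_def D_def
      by (simp only: E') (simp add: field_simps NZ')
    finally show ?thesis .
  qed
  have T1: "phi q a b \<kappa> n (Suc n) = X / D * (F_qv*F_a*F_qvbk*F_qvk*F_q2ak)"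
  proof -
    have "phi q a b \<kappa> n (Suc n) = a^n * (qpoch q q (Suc n) / (qpoch q q n * qpoch q q 1)) * (qpoch (b/a) q n * qpoch a q 1 / qpoch b q (Suc n)) * (qpoch (q^(Suc n)*b*\<kappa>) q 1 * qpoch (q^2*\<kappa>) q n / (qpoch (q*a*\<kappa>) q 1 * qpoch (q^3*a*\<kappa>) q n))"
      by (simp add: phi_def Suc_diff_le numeral_3_eq_3 numeral_2_eq_2)
    also have "\<dots> = X / D * (F_qv*F_a*F_qvbk*F_qvk*F_q2ak)"
      unfolding X_def D_def
      by (simp only: E') (simp add: field_simps NZ')
    finally show ?thesis .
  qed
  have TG: "Gc q a b \<kappa> n n = X / D * (F_v*F_a*(q*NC))"
  proof -
    have "Gc q a b \<kappa> n n = a^n' * (qpoch q q n / (qpoch q q n' * qpoch q q 1)) * (qpoch (b/a) q n * qpoch a q 1 / qpoch b q (n+1)) * (qpoch (q^2*\<kappa>) q n' / qpoch (q*a*\<kappa>) q (n+2)) * Nt q a b \<kappa> n 0"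
      by (simp add: Gc_def hn numeral_2_eq_2)
    also have "\<dots> = X / D * (F_v*F_a*(q*NC))"
      unfolding X_def D_def
      by (simp only: E') (simp add: field_simps NZ' hn)
    finally show ?thesis .
  qed
  have TP: "phi q a b \<kappa> (Suc n) (Suc n) = X / D * (F_avb*F_qk*F_qvk*F_q*F_q2vak)"
  proof -
    have "phi q a b \<kappa> (Suc n) (Suc n) = a^(Suc n) * (qpoch q q (Suc n) / qpoch q q (Suc n)) * (qpoch (b/a) q (Suc n) / qpoch b q (Suc n)) * (qpoch (q*\<kappa>) q (Suc n) / qpoch (q*a*\<kappa>) q (Suc n))"
      by (simp add: phi_def del: qpoch_Suc)
    also have "\<dots> = X / D * (F_avb*F_qk*F_qvk*F_q*F_q2vak)"
      unfolding X_def D_def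
      by (simp only: E') (simp add: field_simps NZ')
    finally show ?thesis .
  qed
  have P: "F_qv*F_a*F_qvbk*F_qvk*F_q2ak - F_qk*F_qvak*F_q*F_vb*F_q2vak = F_v*F_a*(q*NC) - F_avb*F_qk*F_qvk*F_q*F_q2vak"
    unfolding F_qk_def F_qvak_def F_q_def F_vb_def F_q2vak_def F_qv_def F_a_def F_qvbk_def F_qvk_def F_q2ak_def F_v_def F_avb_def F_qak_def NC_def by (rule polyC)
  show ?thesis
    by (simp only: T0 T1 TG TP right_diff_distrib[symmetric] P)
qed


definition Gf :: "complex \<Rightarrow> complex \<Rightarrow> complex \<Rightarrow> complex \<Rightarrow> nat \<Rightarrow> nat \<Rightarrow> complex" where
  "Gf q a b \<kappa> n j = (if j = 0 then 0 else if j \<le> n then Gc q a b \<kappa> n j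
      else if j = Suc n then phi q a b \<kappa> (Suc n) (Suc n) else 0)"

lemma q1: "qpoch x q (Suc 0) = 1 - x" by (simp add: qpoch_def)

lemma base0:
  assumes c: "cnd q a b \<kappa> (Suc 0)"
  shows "phi q a b \<kappa> 0 (Suc 0) - phi q a b \<kappa> 0 0 = Gf q a b \<kappa> 0 0 - Gf q a b \<kappa> 0 (Suc 0)"
proof -
  have na: "a \<noteq> 0" using cnd_a[OF c] .
  have nb: "1 - b \<noteq> 0" using cnd_b[OF c, of 0] by simp
  have nk: "1 - q*a*\<kappa> \<noteq> 0" using cnd_ak[OF c, of 1] by simp
  have nq: "q \<noteq> 1" using cnd_q[OF c, of 1] by simp
  have p01: "phi q a b \<kappa> 0 (Suc 0) = (1 - a) * (1 - q * b * \<kappa>) / ((1 - b) * (1 - q * a * \<kappa>))"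
    using nq by (simp add: phi_def q1)
  have p11: "phi q a b \<kappa> (Suc 0) (Suc 0) = a * (1 - b / a) * (1 - q * \<kappa>) / ((1 - b) * (1 - q * a * \<kappa>))"
    using nq by (simp add: phi_def q1)
  have p00: "phi q a b \<kappa> 0 0 = 1" by (simp add: phi_def qpoch_def)
  define B where "B = 1 - b"
  define Kd where "Kd = 1 - q * a * \<kappa>"
  have nB: "B \<noteq> 0" using nb B_def by simp
  have nK: "Kd \<noteq> 0" using nk Kd_def by simp
  have "(1 - a) * (1 - q * b * \<kappa>) / (B * Kd) - 1 = 0 - a * (1 - b / a) * (1 - q * \<kappa>) / (B * Kd)"
  proof -
    have "(1 - a) * (1 - q * b * \<kappa>) - B * Kd = - ((a - b) * (1 - q * \<kappa>))"
      unfolding B_def Kd_def by algebra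
    moreover have "a * (1 - b / a) = a - b" using na by (simp add: field_simps)
    ultimately show ?thesis using nB nK by (simp add: field_simps)
  qed
  then show ?thesis
    unfolding p01 p11 p00 B_def Kd_def by (simp add: Gf_def p11)
qed

lemma step:
  assumes c: "cnd q a b \<kappa> (Suc n)" and hj: "j \<le> Suc n"
  shows "phi q a b \<kappa> j (Suc n) - phi q a b \<kappa> j n = Gf q a b \<kappa> n j - Gf q a b \<kappa> n (Suc j)"
proof (cases "j = 0")
  case True
  show ?thesis
  proof (cases n)
    case 0
    then show ?thesis using base0 c True by simp
  next
    case (Suc n')
    have "phi q a b \<kappa> 0 (Suc n) - phi q a b \<kappa> 0 n = Gc q a b \<kappa> n 0 * 0 - Gc q a b \<kappa> n 1"
      by (rule caseA[OF c Suc])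
    then show ?thesis using True Suc by (simp add: Gf_def)
  qed
next
  case False
  then obtain j' where j': "j = Suc j'" by (cases j) auto
  show ?thesis
  proof (cases "j < n")
    case True
    define k where "k = n - j"
    have "k \<noteq> 0" using True k_def by simp
    then obtain k' where k': "k = Suc k'" using not0_implies_Suc by blast
    have hn: "n = j + k" using True k_def by simp
    have "phi q a b \<kappa> j (Suc n) - phi q a b \<kappa> j n = Gc q a b \<kappa> n j - Gc q a b \<kappa> n (Suc j)"
      by (rule caseB[OF c j' k' hn])
    then show ?thesis using True False by (simp add: Gf_def)
  next
    case False2: False
    show ?thesis
    proof (cases "j = n")
      case True
      have n': "n = Suc j'" using j' True by simp
      have "phi q a b \<kappa> n (Suc n) - phi q a b \<kappa> n n = Gc q a b \<kappa> n n - phi q a b \<kappa> (Suc n) (Suc n)"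
        by (rule caseC[OF c n'])
      then show ?thesis using True False by (simp add: Gf_def)
    next
      case False3: False
      then have "j = Suc n" using hj False2 by simp
      then show ?thesis by (simp add: Gf_def phi_def)
    qed
  qed
qed

lemma cnd_mono: "cnd q a b \<kappa> (Suc n) \<Longrightarrow> cnd q a b \<kappa> n"
  unfolding cnd_def by auto

lemma sumS: "cnd q a b \<kappa> n \<Longrightarrow> (\<Sum>j\<le>n. phi q a b \<kappa> j n) = 1"
proof (induction n)
  case 0
  then show ?case by (simp add: phi_def qpoch_def)
next
  case (Suc n)
  have IH: "(\<Sum>j\<le>n. phi q a b \<kappa> j n) = 1" using Suc.IH cnd_mono[OF Suc.prems] by blast
  have "(\<Sum>j\<le>Suc n. phi q a b \<kappa> j (Suc n)) = (\<Sum>j\<le>Suc n. phi q a b \<kappa> j n + (Gf q a b \<kappa> n j - Gf q a b \<kappa> n (Suc j)))"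
    by (rule sum.cong) (auto simp: step[OF Suc.prems, symmetric])
  also have "\<dots> = (\<Sum>j\<le>Suc n. phi q a b \<kappa> j n) + (\<Sum>j<Suc (Suc n). Gf q a b \<kappa> n j - Gf q a b \<kappa> n (Suc j))"
    by (simp add: sum.distrib lessThan_Suc_atMost)
  also have "(\<Sum>j<Suc (Suc n). Gf q a b \<kappa> n j - Gf q a b \<kappa> n (Suc j)) = 0"
    by (simp only: sum_lessThan_telescope') (simp add: Gf_def)
  also have "(\<Sum>j\<le>Suc n. phi q a b \<kappa> j n) = 1"
    using IH by (simp add: phi_def)
  finally show ?case by simp
qed

lemma gen_cnd:
  assumes g: "generic_params q a b \<kappa> i"
  shows "cnd q a b \<kappa> i"
proof -
  have a: "a \<noteq> 0" and qb: "qpoch b q i \<noteq> 0"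
    and all: "\<And>j. j \<le> i \<Longrightarrow> qpoch q q j \<noteq> 0 \<and> qpoch q q (i - j) \<noteq> 0 \<and>
             qpoch (q ^ (i - j) * a * \<kappa>) q (i - j) \<noteq> 0"
    using g unfolding generic_params_def by auto
  have 1: "\<forall>m<i. 1 - q^m*b \<noteq> 0" using qpoch_nzD[OF qb] by blast
  have 2: "\<forall>m. 1 \<le> m \<and> m \<le> i \<longrightarrow> 1 - q^m \<noteq> 0"
  proof (intro allI impI)
    fix m assume m: "1 \<le> m \<and> m \<le> i"
    have "qpoch q q i \<noteq> 0" using all[of i] by simp
    from qpoch_nzD[OF this, of "m - 1"] m show "1 - q^m \<noteq> 0"
      by (cases m) (auto simp: mult.commute)
  qed
  have 3: "\<forall>m. 1 \<le> m \<and> m < 2*i \<longrightarrow> 1 - q^m*a*\<kappa> \<noteq> 0"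
  proof (intro allI impI)
    fix m assume m: "1 \<le> m \<and> m < 2*i"
    define K where "K = (m + 2) div 2"
    have K1: "K \<le> i" "K \<le> m" "m - K < K" using m by (auto simp: K_def)
    have "qpoch (q ^ (i - (i - K)) * a * \<kappa>) q (i - (i - K)) \<noteq> 0" using all[of "i - K"] by simp
    then have "qpoch (q ^ K * a * \<kappa>) q K \<noteq> 0" using K1 by simp
    from qpoch_nzD[OF this, of "m - K"] K1 have "1 - q^(m - K) * (q^K*a*\<kappa>) \<noteq> 0" by simp
    moreover have "q^(m - K) * (q^K*a*\<kappa>) = q^m*a*\<kappa>"
      using K1 by (simp add: power_add[symmetric] mult_ac)
    ultimately show "1 - q^m*a*\<kappa> \<noteq> 0" by simp
  qed
  show ?thesis unfolding cnd_def using a 1 2 3 by blast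
qed

theorem mainTheorem6:
  fixes q a b \<kappa> :: complex and i :: nat
  assumes "generic_params q a b \<kappa> i"
  shows "(\<Sum>j\<le>i. phi q a b \<kappa> j i) = 1"
  using sumS[OF gen_cnd[OF assms]] .

end
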